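(* In the setting below, suppose $u(s,t,q)=l(s,t)U(q)$, $v(s,t,q)=m(s,t)V(q)$, $w(s,t,q)=n(s,t)W(q)$, $x(s,t,q)=p(s,t)X(q)$ with all factors of class $C^1$, and assume $U(q_0)=U'(q_0)=V(q_0)=V'(q_0)=0$. Then $\mathbf r$ is an isogeodesic of $\mathbf P$ at $(t_0,q_0)$ if and only if for all $s\in[L_1,L_2]$: $$n(s,t_0)W(q_0)=0,\qquad p(s,t_0)X(q_0)=0,$$ $$\frac{\partial n}{\partial t}(s,t_0)\,W(q_0)\,p(s,t_0)\,X'(q_0)-n(s,t_0)\,W'(q_0)\,\frac{\partial p}{\partial t}(s,t_0)\,X(q_0)\neq0.$$
   Context: $\mathbf r:[L_1,L_2]\to\mathbb R^4$ is an arc-length curve with Frenet frame $\{\mathbf T,\mathbf N,\mathbf B_1,\mathbf B_2\}$ (orthonormal, $\mathbf T=\mathbf r'$, $\mathbf T'=k_1\mathbf N$, $\mathbf N'=-k_1\mathbf T+k_2\mathbf B_1$, $\mathbf B_1'=-k_2\mathbf N+k_3\mathbf B_2$, $\mathbf B_2'=-k_3\mathbf B_1$, $k_1>0$), and $\mathbf P(s,t,q)=\mathbf r(s)+u\mathbf T(s)+v\mathbf N(s)+w\mathbf B_1(s)+x\mathbf B_2(s)$ on $[L_1,L_2]\times[T_1,T_2]\times[Q_1,Q_2]$, with $t_0\in[T_1,T_2]$, $q_0\in[Q_1,Q_2]$ fixed. "$\mathbf r$ is an isogeodesic of $\mathbf P$ at $(t_0,q_0)$" means: $\mathbf P(s,t_0,q_0)=\mathbf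 r(s)$ for all $s$, $\partial_s\mathbf P,\partial_t\mathbf P,\partial_q\mathbf P$ are linearly independent at $(s,t_0,q_0)$, and $\mathbf N(s)$ is parallel to the normal $\partial_s\mathbf P\otimes\partial_t\mathbf P\otimes\partial_q\mathbf P$ (four-dimensional vector product) at $(s,t_0,q_0)$, for all $s$. *)

theory Defs
  imports "HOL-Analysis.Analysis"
begin

text \<open>Four-dimensional vector product a (x) b (x) c: the vector whose components are the
cofactors of the formal determinant with rows (e_1,...,e_4), a, b, c.
Equivalently, (a (x) b (x) c) . y = det[y; a; b; c] (up to the fixed index ordering of type 4,
which only affects the overall sign).\<close>
definition cross4 :: "real^4 \<Rightarrow> real^4 \<Rightarrow> real^4 \<Rightarrow> real^4" where
  "cross4 a b c = (\<chi> i. det (\<chi> j k. if j = 1 then (if k = i then 1 else 0)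
                                   else if j = 2 then a $ k
                                   else if j = 3 then b $ k
                                   else c $ k))"

definition lin_indep3 :: "real^4 \<Rightarrow> real^4 \<Rightarrow> real^4 \<Rightarrow> bool" where
  "lin_indep3 a b c \<longleftrightarrow>
     (\<forall>x y z. x *\<^sub>R a + y *\<^sub>R b + z *\<^sub>R c = 0 \<longrightarrow> x = 0 \<and> y = 0 \<and> z = 0)"

definition parallel :: "real^4 \<Rightarrow> real^4 \<Rightarrow> bool" where
  "parallel a b \<longleftrightarrow> (\<exists>c. a = c *\<^sub>R b) \<or> (\<exists>c. b = c *\<^sub>R a)"

definition C1_on :: "('a::real_normed_vector \<Rightarrow> 'b::real_normed_vector) \<Rightarrow> 'a set \<Rightarrow> bool" where
  "C1_on f S \<longleftrightarrow> (\<exists>f'. (\<forall>z\<in>S. (f has_derivative blinfun_apply (f' z)) (at z within S))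
                        \<and> continuous_on S f')"

definition isogeodesic ::
  "(real \<Rightarrow> real^4) \<Rightarrow> (real \<Rightarrow> real^4) \<Rightarrow> (real \<Rightarrow> real \<Rightarrow> real \<Rightarrow> real^4)
   \<Rightarrow> real \<Rightarrow> real \<Rightarrow> real \<Rightarrow> real \<Rightarrow> real \<Rightarrow> real \<Rightarrow> real \<Rightarrow> real \<Rightarrow> bool" where
  "isogeodesic r N P L1 L2 T1 T2 Q1 Q2 t0 q0 \<longleftrightarrow>
     (\<forall>s\<in>{L1..L2}.
        P s t0 q0 = r s \<and>
        (let Ps = vector_derivative (\<lambda>s'. P s' t0 q0) (at s within {L1..L2});
             Pt = vector_derivative (\<lambda>t. P s t q0) (at t0 within {T1..T2});
             Pq = vector_derivative (\<lambda>q. P s t0 q) (at q0 within {Q1..Q2})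
         in lin_indep3 Ps Pt Pq \<and> parallel (N s) (cross4 Ps Pt Pq)))"

end

theory Submission
  imports Defs
begin


definition M4 :: "real^4 \<Rightarrow> real^4 \<Rightarrow> real^4 \<Rightarrow> real^4 \<Rightarrow> real^4^4" where
 "M4 y a b c = (\<chi> j. if j = 1 then y else (\<chi> k. if j = 2 then a $ k else if j = 3 then b $ k else c $ k))"

lemma cross4_dot: "cross4 a b c \<bullet> y = det (M4 y a b c)"
proof -
  have e: "M4 y a b c = (\<chi> j. if j = 1 then (\<Sum>i\<in>UNIV. (\<lambda>i. (y$i) *s axis i 1) i) else (\<chi> k. if j = 2 then a $ k else if j = 3 then b $ k else c $ k))"
    unfolding M4_def basis_expansion ..
  have "det (M4 y a b c) = (\<Sum>i\<in>UNIV. det (\<chi> j. if j = 1 then (y$i) *s axis i 1 else (\<chi> k. if j = 2 then a $ k else if j = 3 then b $ k else c $ k)))"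
    unfolding e by (rule det_linear_row_sum) simp
  also have "\<dots> = (\<Sum>i\<in>UNIV. y$i * det (\<chi> j. if j = 1 then axis i 1 else (\<chi> k. if j = 2 then a $ k else if j = 3 then b $ k else c $ k)))"
    by (rule sum.cong[OF refl], rule det_row_mul)
  also have "\<dots> = (\<Sum>i\<in>UNIV. y$i * cross4 a b c $ i)"
    proof (rule sum.cong[OF refl])
    fix i :: 4
    have "((\<chi> j. if j = 1 then axis i 1 else (\<chi> k. if j = 2 then a $ k else if j = 3 then b $ k else c $ k))::real^4^4) =
      (\<chi> j k. if j = 1 then (if k = i then 1 else 0) else if j = 2 then a $ k else if j = 3 then b $ k else c $ k)"
      by (simp add: vec_eq_iff axis_def)
    then show "y$i * det (\<chi> j. if j = 1 then axis i 1 else (\<chi> k. if j = 2 then a $ k else if j = 3 then b $ k else c $ k)) = y$i * cross4 a b c $ i"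
      unfolding cross4_def by simp
  qed
  finally show ?thesis by (simp add: inner_vec_def mult.commute)
qed

lemma d12: "(1::4) \<noteq> 2" "(1::4) \<noteq> 3" "(1::4) \<noteq> 4" "(2::4) \<noteq> 3" by simp_all

lemma cross4_orth: "cross4 a b c \<bullet> a = 0" "cross4 a b c \<bullet> b = 0" "cross4 a b c \<bullet> c = 0"
  unfolding cross4_dot
    apply (rule det_identical_rows[of 1 2]) apply simp apply (simp add: row_def M4_def vec_eq_iff)
    apply (rule det_identical_rows[of 1 3]) apply simp apply (simp add: row_def M4_def vec_eq_iff)
    apply (rule det_identical_rows[of 1 4]) apply simp apply (simp add: row_def M4_def vec_eq_iff)
  done

lemma solve2:
  fixes a b c d x y :: real
  assumes "a * x + c * y = 0" "b * x + d * y = 0" "a * d - b * c \<noteq> 0"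
  shows "x = 0 \<and> y = 0"
proof -
  have "x * (a*d - b*c) = d * (a * x + c * y) - c * (b * x + d * y)" by (simp add: algebra_simps)
  also have "\<dots> = 0" using assms by simp
  finally have x: "x = 0" using assms(3) by simp
  have "y * (a*d - b*c) = a * (b * x + d * y) - b * (a * x + c * y)" by (simp add: algebra_simps)
  also have "\<dots> = 0" using assms by simp
  finally have "y = 0" using assms(3) by simp
  with x show ?thesis by simp
qed


lemma frame_complete:
  fixes T N B1 B2 v :: "real^4"
  assumes on: "T \<bullet> T = 1" "N \<bullet> N = 1" "B1 \<bullet> B1 = 1" "B2 \<bullet> B2 = 1"
    "T \<bullet> N = 0" "T \<bullet> B1 = 0" "T \<bullet> B2 = 0" "N \<bullet> B1 = 0" "N \<bullet> B2 = 0" "B1 \<bullet> B2 = 0"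
    and v: "v \<bullet> T = 0" "v \<bullet> B1 = 0" "v \<bullet> B2 = 0"
  shows "v = (v \<bullet> N) *\<^sub>R N"
proof (rule ccontr)
  define w where "w = v - (v \<bullet> N) *\<^sub>R N"
  assume "v \<noteq> (v \<bullet> N) *\<^sub>R N"
  then have w0: "w \<noteq> 0" by (simp add: w_def)
  then have ww: "w \<bullet> w \<noteq> 0" by simp
  have wo: "w \<bullet> T = 0" "w \<bullet> N = 0" "w \<bullet> B1 = 0" "w \<bullet> B2 = 0"
    using on v by (simp_all add: w_def inner_diff_left inner_commute[of N T] inner_commute[of N B1] inner_commute[of N B2])
  have wo': "T \<bullet> w = 0" "N \<bullet> w = 0" "B1 \<bullet> w = 0" "B2 \<bullet> w = 0"
    using wo by (simp_all add: inner_commute)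
  have on': "N \<bullet> T = 0" "B1 \<bullet> T = 0" "B2 \<bullet> T = 0" "B1 \<bullet> N = 0" "B2 \<bullet> N = 0" "B2 \<bullet> B1 = 0"
    using on by (simp_all add: inner_commute)
  have ne: "\<And>x y::real^4. x \<bullet> x \<noteq> 0 \<Longrightarrow> x \<bullet> y = 0 \<Longrightarrow> x \<noteq> y" by auto
  have d0: "T \<noteq> N" by (rule ne) (use on wo' ww in simp_all)
  have d1: "T \<noteq> B1" by (rule ne) (use on wo' ww in simp_all)
  have d2: "T \<noteq> B2" by (rule ne) (use on wo' ww in simp_all)
  have d3: "T \<noteq> w" by (rule ne) (use on wo' ww in simp_all)
  have d4: "N \<noteq> B1" by (rule ne) (use on wo' ww in simp_all)
  have d5: "N \<noteq> B2" by (rule ne) (use on wo' ww in simp_all)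
  have d6: "N \<noteq> w" by (rule ne) (use on wo' ww in simp_all)
  have d7: "B1 \<noteq> B2" by (rule ne) (use on wo' ww in simp_all)
  have d8: "B1 \<noteq> w" by (rule ne) (use on wo' ww in simp_all)
  have d9: "B2 \<noteq> w" by (rule ne) (use on wo' ww in simp_all)
  note dist = d0 d1 d2 d3 d4 d5 d6 d7 d8 d9
  let ?S = "{T, N, B1, B2, w}"
  have "pairwise orthogonal ?S"
    unfolding pairwise_insert orthogonal_def using on on' wo wo' by auto
  moreover have "0 \<notin> ?S" using on w0 by auto
  ultimately have "independent ?S" by (rule pairwise_orthogonal_independent)
  then have "card ?S \<le> DIM(real^4)" using independent_bound by blast
  moreover have "card ?S = 5"
    using dist by simp
  ultimately show False by simp
qed

lemma lin_indep_frame: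
  fixes T B1 B2 :: "real^4"
  assumes on: "T \<bullet> T = 1" "B1 \<bullet> B1 = 1" "B2 \<bullet> B2 = 1"
    "T \<bullet> B1 = 0" "T \<bullet> B2 = 0" "B1 \<bullet> B2 = 0"
  shows "lin_indep3 T (a *\<^sub>R B1 + b *\<^sub>R B2) (c *\<^sub>R B1 + d *\<^sub>R B2) \<longleftrightarrow> a * d - b * c \<noteq> 0"
proof
  assume li: "lin_indep3 T (a *\<^sub>R B1 + b *\<^sub>R B2) (c *\<^sub>R B1 + d *\<^sub>R B2)"
  then have li': "\<And>y z. y *\<^sub>R (a *\<^sub>R B1 + b *\<^sub>R B2) + z *\<^sub>R (c *\<^sub>R B1 + d *\<^sub>R B2) = 0 \<Longrightarrow> y = 0 \<and> z = 0"
  proof -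
    fix y z assume h: "y *\<^sub>R (a *\<^sub>R B1 + b *\<^sub>R B2) + z *\<^sub>R (c *\<^sub>R B1 + d *\<^sub>R B2) = 0"
    have "0 *\<^sub>R T + y *\<^sub>R (a *\<^sub>R B1 + b *\<^sub>R B2) + z *\<^sub>R (c *\<^sub>R B1 + d *\<^sub>R B2) = 0" using h by simp
    with li show "y = 0 \<and> z = 0" unfolding lin_indep3_def by blast
  qed
  show "a * d - b * c \<noteq> 0"
  proof
    assume D: "a * d - b * c = 0"
    show False
    proof (cases "a = 0 \<and> c = 0")
      case True
      show False
      proof (cases "b = 0 \<and> d = 0")
        case True2: True
        have "1 *\<^sub>R (a *\<^sub>R B1 + b *\<^sub>R B2) + 0 *\<^sub>R (c *\<^sub>R B1 + d *\<^sub>R B2) = 0"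
          using True True2 by simp
        from li'[OF this] show False by simp
      next
        case False2: False
        have "d *\<^sub>R (a *\<^sub>R B1 + b *\<^sub>R B2) + (-b) *\<^sub>R (c *\<^sub>R B1 + d *\<^sub>R B2) = 0"
          using True by (simp add: scaleR_add_right)
        from li'[OF this] False2 show False by simp
      qed
    next
      case False
      have "c *\<^sub>R (a *\<^sub>R B1 + b *\<^sub>R B2) + (- a) *\<^sub>R (c *\<^sub>R B1 + d *\<^sub>R B2) = (c*b - a*d) *\<^sub>R B2"
        by (simp add: scaleR_add_right scaleR_diff_left mult.commute)
      also have "\<dots> = 0" using D by (simp add: mult.commute)
      finally have "c *\<^sub>R (a *\<^sub>R B1 + b *\<^sub>R B2) + (- a) *\<^sub>R (c *\<^sub>R B1 + d *\<^sub>R B2) = 0" .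
      from li'[OF this] False show False by simp
    qed
  qed
next
  assume D: "a * d - b * c \<noteq> 0"
  have on': "B1 \<bullet> T = 0" "B2 \<bullet> T = 0" "B2 \<bullet> B1 = 0" using on by (simp_all add: inner_commute)
  show "lin_indep3 T (a *\<^sub>R B1 + b *\<^sub>R B2) (c *\<^sub>R B1 + d *\<^sub>R B2)"
    unfolding lin_indep3_def
  proof (intro allI impI)
    fix x y z :: real
    assume e: "x *\<^sub>R T + y *\<^sub>R (a *\<^sub>R B1 + b *\<^sub>R B2) + z *\<^sub>R (c *\<^sub>R B1 + d *\<^sub>R B2) = 0"
    have e1: "x = 0" using arg_cong[OF e, of "\<lambda>u. u \<bullet> T"] on on'
      by (simp add: inner_add_left)
    have e2: "y * a + z * c = 0" using arg_cong[OF e, of "\<lambda>u. u \<bullet> B1"] on on'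
      by (simp add: inner_add_left algebra_simps)
    have e3: "y * b + z * d = 0" using arg_cong[OF e, of "\<lambda>u. u \<bullet> B2"] on on'
      by (simp add: inner_add_left algebra_simps)
    have "a * y + c * z = 0" "b * y + d * z = 0" using e2 e3 by (simp_all add: mult.commute)
    from solve2[OF this] D have "y = 0 \<and> z = 0" by simp
    with e1 show "x = 0 \<and> y = 0 \<and> z = 0" by simp
  qed
qed

lemma vd_Icc:
  fixes f :: "real \<Rightarrow> 'a::real_normed_vector"
  assumes "a < b" "x \<in> {a..b}" "(f has_vector_derivative f') (at x within {a..b})"
  shows "vector_derivative f (at x within {a..b}) = f'"
  using vector_derivative_within_cbox[of a b x f f'] assms by (simp add: cbox_interval)

lemma C1_diff: "C1_on f S \<Longrightarrow> x \<in> S \<Longrightarrow> f differentiable (at x within S)"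
  unfolding C1_on_def differentiable_def by blast

lemma C1_diff_t:
  fixes f :: "real \<times> real \<Rightarrow> real"
  assumes "C1_on f (A \<times> B)" "s \<in> A" "t \<in> B"
  shows "((\<lambda>t. f (s,t)) has_real_derivative vector_derivative (\<lambda>t. f (s,t)) (at t within B)) (at t within B)"
proof -
  obtain D where D: "(f has_derivative D) (at (s,t) within A \<times> B)"
    using C1_diff[OF assms(1)] assms(2,3) unfolding differentiable_def by blast
  have 1: "((\<lambda>t. (s,t)) has_derivative (\<lambda>h. (0,h))) (at t within B)"
    by (auto intro!: derivative_eq_intros)
  have 2: "(f has_derivative D) (at ((\<lambda>t. (s,t)) t) within (\<lambda>t. (s,t)) ` B)"
    by (rule has_derivative_subset[OF D]) (use assms in auto)
  have "(f \<circ> (\<lambda>t. (s,t))) differentiable (at t within B)"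
    using diff_chain_within[OF 1 2] unfolding differentiable_def by blast
  then have "(\<lambda>t. f (s,t)) differentiable (at t within B)" by (simp add: o_def)
  then show ?thesis
    unfolding has_real_derivative_iff_has_vector_derivative vector_derivative_works .
qed

lemma C1_diff_q:
  fixes f :: "real \<Rightarrow> real"
  assumes "C1_on f B" "t \<in> B"
  shows "(f has_real_derivative vector_derivative f (at t within B)) (at t within B)"
  using C1_diff[OF assms]
  unfolding has_real_derivative_iff_has_vector_derivative vector_derivative_works .


lemma deriv2:
  fixes f g :: "real \<Rightarrow> real" and C D R :: "real^4"
  assumes "(f has_real_derivative f') (at t within B)" "(g has_real_derivative g') (at t within B)"
  shows "((\<lambda>t. R + (f t * a) *\<^sub>R C + (g t * b) *\<^sub>R D) has_vector_derivative ((f' * a) *\<^sub>R C + (g' * b) *\<^sub>R D)) (at t within B)"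
  using assms by (auto intro!: derivative_eq_intros)

lemma deriv4:
  fixes f g h k :: "real \<Rightarrow> real" and C D E F R :: "real^4"
  assumes "(f has_real_derivative f') (at t within B)" "(g has_real_derivative g') (at t within B)"
    "(h has_real_derivative h') (at t within B)" "(k has_real_derivative k') (at t within B)"
  shows "((\<lambda>t. R + (a * f t) *\<^sub>R C + (b * g t) *\<^sub>R D + (c * h t) *\<^sub>R E + (d * k t) *\<^sub>R F) has_vector_derivative
     ((a * f') *\<^sub>R C + (b * g') *\<^sub>R D + (c * h') *\<^sub>R E + (d * k') *\<^sub>R F)) (at t within B)"
  using assms by (auto intro!: derivative_eq_intros simp: mult.commute)

theorem mainTheorem3:
  fixes r T N B1 B2 :: "real \<Rightarrow> real^4"
    and k1 k2 k3 :: "real \<Rightarrow> real"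
    and l m n p :: "real \<times> real \<Rightarrow> real"
    and U V W X :: "real \<Rightarrow> real"
    and L1 L2 T1 T2 Q1 Q2 t0 q0 :: real
  assumes intervals: "L1 < L2" "T1 < T2" "Q1 < Q2"
    and t0: "t0 \<in> {T1..T2}" and q0: "q0 \<in> {Q1..Q2}"
    and orthonormal: "\<forall>s\<in>{L1..L2}.
          T s \<bullet> T s = 1 \<and> N s \<bullet> N s = 1 \<and> B1 s \<bullet> B1 s = 1 \<and> B2 s \<bullet> B2 s = 1 \<and>
          T s \<bullet> N s = 0 \<and> T s \<bullet> B1 s = 0 \<and> T s \<bullet> B2 s = 0 \<and>
          N s \<bullet> B1 s = 0 \<and> N s \<bullet> B2 s = 0 \<and> B1 s \<bullet> B2 s = 0"
    and frenet: "\<forall>s\<in>{L1..L2}.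
          (r has_vector_derivative T s) (at s within {L1..L2}) \<and>
          (T has_vector_derivative (k1 s *\<^sub>R N s)) (at s within {L1..L2}) \<and>
          (N has_vector_derivative (- k1 s *\<^sub>R T s + k2 s *\<^sub>R B1 s)) (at s within {L1..L2}) \<and>
          (B1 has_vector_derivative (- k2 s *\<^sub>R N s + k3 s *\<^sub>R B2 s)) (at s within {L1..L2}) \<and>
          (B2 has_vector_derivative (- k3 s *\<^sub>R B1 s)) (at s within {L1..L2})"
    and k1_pos: "\<forall>s\<in>{L1..L2}. k1 s > 0"
    and C1_lmnp: "C1_on l ({L1..L2} \<times> {T1..T2})" "C1_on m ({L1..L2} \<times> {T1..T2})"
                 "C1_on n ({L1..L2} \<times> {T1..T2})" "C1_on p ({L1..L2} \<times> {T1..T2})"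
    and C1_UVWX: "C1_on U {Q1..Q2}" "C1_on V {Q1..Q2}" "C1_on W {Q1..Q2}" "C1_on X {Q1..Q2}"
    and U0: "U q0 = 0" "vector_derivative U (at q0 within {Q1..Q2}) = 0"
    and V0: "V q0 = 0" "vector_derivative V (at q0 within {Q1..Q2}) = 0"
  shows "isogeodesic r N
           (\<lambda>s t q. r s + (l (s, t) * U q) *\<^sub>R T s + (m (s, t) * V q) *\<^sub>R N s
                        + (n (s, t) * W q) *\<^sub>R B1 s + (p (s, t) * X q) *\<^sub>R B2 s)
           L1 L2 T1 T2 Q1 Q2 t0 q0
         \<longleftrightarrow>
         (\<forall>s\<in>{L1..L2}.
            n (s, t0) * W q0 = 0 \<and> p (s, t0) * X q0 = 0 \<and>
            vector_derivative (\<lambda>t. n (s, t)) (at t0 within {T1..T2}) * W q0 * p (s, t0)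
              * vector_derivative X (at q0 within {Q1..Q2})
            - n (s, t0) * vector_derivative W (at q0 within {Q1..Q2})
              * vector_derivative (\<lambda>t. p (s, t)) (at t0 within {T1..T2}) * X q0 \<noteq> 0)"
  proof -
  let ?I = "{L1..L2}" and ?J = "{T1..T2}" and ?K = "{Q1..Q2}"
  let ?P = "\<lambda>s t q. r s + (l (s, t) * U q) *\<^sub>R T s + (m (s, t) * V q) *\<^sub>R N s
                        + (n (s, t) * W q) *\<^sub>R B1 s + (p (s, t) * X q) *\<^sub>R B2 s"
  define nt where "nt s = vector_derivative (\<lambda>t. n (s, t)) (at t0 within ?J)" for s
  define pt where "pt s = vector_derivative (\<lambda>t. p (s, t)) (at t0 within ?J)" for s
  define W' where "W' = vector_derivative W (at q0 within ?K)"
  define X' where "X' = vector_derivative X (at q0 within ?K)"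
  have A: "?P s t0 q0 = r s \<longleftrightarrow> n (s, t0) * W q0 = 0 \<and> p (s, t0) * X q0 = 0" if s: "s \<in> ?I" for s
  proof -
    have e: "?P s t0 q0 = r s + (n (s, t0) * W q0) *\<^sub>R B1 s + (p (s, t0) * X q0) *\<^sub>R B2 s"
      using U0 V0 by simp
    show ?thesis
    proof
      assume "?P s t0 q0 = r s"
      then have z: "(n (s, t0) * W q0) *\<^sub>R B1 s + (p (s, t0) * X q0) *\<^sub>R B2 s = 0" using e by simp
      have o: "B1 s \<bullet> B1 s = 1" "B1 s \<bullet> B2 s = 0" "B2 s \<bullet> B2 s = 1" using orthonormal s by auto
      have o2: "B2 s \<bullet> B1 s = 0" using o(2) by (metis inner_commute)
      have "n (s, t0) * W q0 = 0" using arg_cong[OF z, of "\<lambda>u. B1 s \<bullet> u"] o o2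
        by (simp add: inner_add_right)
      moreover have "p (s, t0) * X q0 = 0" using arg_cong[OF z, of "\<lambda>u. B2 s \<bullet> u"] o o2
        by (simp add: inner_add_right)
      ultimately show "n (s, t0) * W q0 = 0 \<and> p (s, t0) * X q0 = 0" by simp
    qed (subst e, auto)
  qed
  have Pt: "vector_derivative (\<lambda>t. ?P s t q0) (at t0 within ?J) = (nt s * W q0) *\<^sub>R B1 s + (pt s * X q0) *\<^sub>R B2 s"
    if s: "s \<in> ?I" for s
  proof -
    have e: "(\<lambda>t. ?P s t q0) = (\<lambda>t. r s + (n (s, t) * W q0) *\<^sub>R B1 s + (p (s, t) * X q0) *\<^sub>R B2 s)"
      using U0 V0 by simp
    have "((\<lambda>t. r s + (n (s, t) * W q0) *\<^sub>R B1 s + (p (s, t) * X q0) *\<^sub>R B2 s) has_vector_derivative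
        (nt s * W q0) *\<^sub>R B1 s + (pt s * X q0) *\<^sub>R B2 s) (at t0 within ?J)"
      unfolding nt_def pt_def
      by (rule deriv2[where f="\<lambda>t. n (s, t)" and g="\<lambda>t. p (s, t)"];
          rule C1_diff_t[where A="?I"]) (use C1_lmnp s t0 in auto)
    then show ?thesis unfolding e using intervals t0 by (intro vd_Icc) auto
  qed
  have Pq: "vector_derivative (\<lambda>q. ?P s t0 q) (at q0 within ?K) = (n (s, t0) * W') *\<^sub>R B1 s + (p (s, t0) * X') *\<^sub>R B2 s"
    if s: "s \<in> ?I" for s
  proof -
    have "((\<lambda>q. ?P s t0 q) has_vector_derivative
        (l (s, t0) * vector_derivative U (at q0 within ?K)) *\<^sub>R T s
      + (m (s, t0) * vector_derivative V (at q0 within ?K)) *\<^sub>R N s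
      + (n (s, t0) * W') *\<^sub>R B1 s + (p (s, t0) * X') *\<^sub>R B2 s) (at q0 within ?K)"
      unfolding W'_def X'_def
      by (rule deriv4; rule C1_diff_q) (use C1_UVWX q0 in auto)
    then have "((\<lambda>q. ?P s t0 q) has_vector_derivative
        (n (s, t0) * W') *\<^sub>R B1 s + (p (s, t0) * X') *\<^sub>R B2 s) (at q0 within ?K)"
      using U0 V0 by simp
    then show ?thesis using intervals q0 by (intro vd_Icc) auto
  qed
  have Ps: "vector_derivative (\<lambda>s'. ?P s' t0 q0) (at s within ?I) = T s"
    if s: "s \<in> ?I" and C: "\<forall>s\<in>?I. ?P s t0 q0 = r s" for s
  proof -
    have "((\<lambda>s'. ?P s' t0 q0) has_vector_derivative T s) (at s within ?I)"
    proof (rule has_vector_derivative_transform[where f=r, OF s])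
      show "(r has_vector_derivative T s) (at s within ?I)" using frenet s by blast
      fix x assume "x \<in> ?I"
      then show "?P x t0 q0 = r x" using C by blast
    qed
    then show ?thesis using intervals s by (intro vd_Icc) auto
  qed
  have Dexp: "nt s * W q0 * (p (s, t0) * X') - pt s * X q0 * (n (s, t0) * W') =
      vector_derivative (\<lambda>t. n (s, t)) (at t0 within {T1..T2}) * W q0 * p (s, t0)
              * vector_derivative X (at q0 within {Q1..Q2})
            - n (s, t0) * vector_derivative W (at q0 within {Q1..Q2})
              * vector_derivative (\<lambda>t. p (s, t)) (at t0 within {T1..T2}) * X q0" for s
    unfolding nt_def pt_def W'_def X'_def by (simp add: algebra_simps)
  have LI: "lin_indep3 (T s) ((nt s * W q0) *\<^sub>R B1 s + (pt s * X q0) *\<^sub>R B2 s)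
          ((n (s, t0) * W') *\<^sub>R B1 s + (p (s, t0) * X') *\<^sub>R B2 s)
      \<longleftrightarrow> nt s * W q0 * (p (s, t0) * X') - pt s * X q0 * (n (s, t0) * W') \<noteq> 0"
    if s: "s \<in> ?I" for s
    by (rule lin_indep_frame) (use orthonormal s in auto)
  show ?thesis
    unfolding isogeodesic_def Let_def
  proof
    assume L: "\<forall>s\<in>?I. ?P s t0 q0 = r s \<and>
        lin_indep3 (vector_derivative (\<lambda>s'. ?P s' t0 q0) (at s within ?I))
          (vector_derivative (\<lambda>t. ?P s t q0) (at t0 within ?J))
          (vector_derivative (\<lambda>q. ?P s t0 q) (at q0 within ?K)) \<and>
        parallel (N s) (cross4 (vector_derivative (\<lambda>s'. ?P s' t0 q0) (at s within ?I))
          (vector_derivative (\<lambda>t. ?P s t q0) (at t0 within ?J))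
          (vector_derivative (\<lambda>q. ?P s t0 q) (at q0 within ?K)))"
    then have C: "\<forall>s\<in>?I. ?P s t0 q0 = r s" by blast
    show "\<forall>s\<in>?I. n (s, t0) * W q0 = 0 \<and> p (s, t0) * X q0 = 0 \<and>
            vector_derivative (\<lambda>t. n (s, t)) (at t0 within {T1..T2}) * W q0 * p (s, t0)
              * vector_derivative X (at q0 within {Q1..Q2})
            - n (s, t0) * vector_derivative W (at q0 within {Q1..Q2})
              * vector_derivative (\<lambda>t. p (s, t)) (at t0 within {T1..T2}) * X q0 \<noteq> 0"
    proof
      fix s assume s: "s \<in> ?I"
      have li: "lin_indep3 (T s) ((nt s * W q0) *\<^sub>R B1 s + (pt s * X q0) *\<^sub>R B2 s)
          ((n (s, t0) * W') *\<^sub>R B1 s + (p (s, t0) * X') *\<^sub>R B2 s)"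
        using bspec[OF L s] unfolding Ps[OF s C] Pt[OF s] Pq[OF s] by blast
      show "n (s, t0) * W q0 = 0 \<and> p (s, t0) * X q0 = 0 \<and>
            vector_derivative (\<lambda>t. n (s, t)) (at t0 within {T1..T2}) * W q0 * p (s, t0)
              * vector_derivative X (at q0 within {Q1..Q2})
            - n (s, t0) * vector_derivative W (at q0 within {Q1..Q2})
              * vector_derivative (\<lambda>t. p (s, t)) (at t0 within {T1..T2}) * X q0 \<noteq> 0"
        using A[OF s] C s li LI[OF s] Dexp[of s] by simp
    qed
  next
    assume R: "\<forall>s\<in>?I. n (s, t0) * W q0 = 0 \<and> p (s, t0) * X q0 = 0 \<and>
            vector_derivative (\<lambda>t. n (s, t)) (at t0 within {T1..T2}) * W q0 * p (s, t0)
              * vector_derivative X (at q0 within {Q1..Q2})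
            - n (s, t0) * vector_derivative W (at q0 within {Q1..Q2})
              * vector_derivative (\<lambda>t. p (s, t)) (at t0 within {T1..T2}) * X q0 \<noteq> 0"
    then have C: "\<forall>s\<in>?I. ?P s t0 q0 = r s" using A by blast
    show "\<forall>s\<in>?I. ?P s t0 q0 = r s \<and>
        lin_indep3 (vector_derivative (\<lambda>s'. ?P s' t0 q0) (at s within ?I))
          (vector_derivative (\<lambda>t. ?P s t q0) (at t0 within ?J))
          (vector_derivative (\<lambda>q. ?P s t0 q) (at q0 within ?K)) \<and>
        parallel (N s) (cross4 (vector_derivative (\<lambda>s'. ?P s' t0 q0) (at s within ?I))
          (vector_derivative (\<lambda>t. ?P s t q0) (at t0 within ?J))
          (vector_derivative (\<lambda>q. ?P s t0 q) (at q0 within ?K)))"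
    proof
      fix s assume s: "s \<in> ?I"
      define a where "a = nt s * W q0"
      define b where "b = pt s * X q0"
      define c where "c = n (s, t0) * W'"
      define d where "d = p (s, t0) * X'"
      have D: "a * d - b * c \<noteq> 0" using R s Dexp[of s] unfolding a_def b_def c_def d_def by simp
      have li: "lin_indep3 (T s) (a *\<^sub>R B1 s + b *\<^sub>R B2 s) (c *\<^sub>R B1 s + d *\<^sub>R B2 s)"
        using LI[OF s] D unfolding a_def b_def c_def d_def by simp
      define v where "v = cross4 (T s) (a *\<^sub>R B1 s + b *\<^sub>R B2 s) (c *\<^sub>R B1 s + d *\<^sub>R B2 s)"
      have o: "v \<bullet> T s = 0" "v \<bullet> (a *\<^sub>R B1 s + b *\<^sub>R B2 s) = 0" "v \<bullet> (c *\<^sub>R B1 s + d *\<^sub>R B2 s) = 0"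
        unfolding v_def by (rule cross4_orth)+
      then have "a * (v \<bullet> B1 s) + b * (v \<bullet> B2 s) = 0" "c * (v \<bullet> B1 s) + d * (v \<bullet> B2 s) = 0"
        by (simp_all add: inner_add_right)
      from solve2[OF this(1) this(2)] D have "v \<bullet> B1 s = 0 \<and> v \<bullet> B2 s = 0"
        by (simp add: algebra_simps)
      then have "v = (v \<bullet> N s) *\<^sub>R N s"
        using o(1) orthonormal s by (intro frame_complete[of "T s" "N s" "B1 s" "B2 s"]) auto
      then have par: "parallel (N s) v" unfolding parallel_def by blast
      show "?P s t0 q0 = r s \<and>
        lin_indep3 (vector_derivative (\<lambda>s'. ?P s' t0 q0) (at s within ?I))
          (vector_derivative (\<lambda>t. ?P s t q0) (at t0 within ?J))
          (vector_derivative (\<lambda>q. ?P s t0 q) (at q0 within ?K)) \<and>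
        parallel (N s) (cross4 (vector_derivative (\<lambda>s'. ?P s' t0 q0) (at s within ?I))
          (vector_derivative (\<lambda>t. ?P s t q0) (at t0 within ?J))
          (vector_derivative (\<lambda>q. ?P s t0 q) (at q0 within ?K)))"
        unfolding Ps[OF s C] Pt[OF s] Pq[OF s]
        using bspec[OF C s] li par unfolding v_def a_def b_def c_def d_def by blast
    qed
  qed
qed

end
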